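(* Let $k\geq 3$ be an odd integer and let $G$ be a bipartite graph. If $|V(G)|$ is odd, then $mp^{k}(G)=smp^{k}(G)=0$. If $|V(G)|$ is even, then $mp^{k}(G)=mp(G)$ and $smp^{k}(G)\leq smp(G)$.
   Context: All graphs are finite and simple; $\Gamma(v)$ is the set of edges incident with $v$. An integer $k$-matching of $G$ is a function $h:E(G)\to\{0,1,\dots,k\}$ with $\sum_{e\in\Gamma(v)}h(e)\leq k$ for all $v$; it is perfect if every vertex has $\sum_{e\in\Gamma(v)}h(e)=k$, and almost perfect if exactly one vertex $v'$ has $\sum_{e\in\Gamma(v')}h(e)=k-1$ and all other vertices have sum $k$. For $F\subseteq V(G)\cup E(G)$, $G-F$ is obtained by deleting the vertices of $F$ (with incident edges) and the edges of $F$. $mp^{k}(G)$ (resp. $smp^{k}(G)$) is the minimum size of a set $F\subseteq E(G)$ (resp. $F\subseteq V(G)\cup E(G)$) such that $G-F$ has neither a perfect nor an almost perfect integer $k$-matching. $mp(G)$ (resp. $smp(G)$) is the minimum size of a set $F\subseteq E(G)$ (resp. $F\subseteq V(G)\cup E(G)$) such that $G-F$ has neither a perfect matching nor an almost perfect matching (a matching leaving exactly one vertex unsaturated). *)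

theory Defs
  imports Main
begin

definition simple_graph :: "'a set \<Rightarrow> 'a set set \<Rightarrow> bool" where
  "simple_graph V E \<longleftrightarrow> finite V \<and> (\<forall>e\<in>E. e \<subseteq> V \<and> card e = 2)"

definition bipartite :: "'a set \<Rightarrow> 'a set set \<Rightarrow> bool" where
  "bipartite V E \<longleftrightarrow> (\<exists>A B. A \<union> B = V \<and> A \<inter> B = {} \<and>
      (\<forall>e\<in>E. card (e \<inter> A) = 1 \<and> card (e \<inter> B) = 1))"

definition inc :: "'a set set \<Rightarrow> 'a \<Rightarrow> 'a set set" where
  "inc E v = {e \<in> E. v \<in> e}"

definition int_k_matching :: "nat \<Rightarrow> 'a set \<Rightarrow> 'a set set \<Rightarrow> ('a set \<Rightarrow> nat) \<Rightarrow> bool" where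
  "int_k_matching k V E h \<longleftrightarrow> (\<forall>e\<in>E. h e \<le> k) \<and> (\<forall>v\<in>V. sum h (inc E v) \<le> k)"

definition perfect_int_k_matching :: "nat \<Rightarrow> 'a set \<Rightarrow> 'a set set \<Rightarrow> ('a set \<Rightarrow> nat) \<Rightarrow> bool" where
  "perfect_int_k_matching k V E h \<longleftrightarrow> int_k_matching k V E h \<and> (\<forall>v\<in>V. sum h (inc E v) = k)"

definition almost_perfect_int_k_matching :: "nat \<Rightarrow> 'a set \<Rightarrow> 'a set set \<Rightarrow> ('a set \<Rightarrow> nat) \<Rightarrow> bool" where
  "almost_perfect_int_k_matching k V E h \<longleftrightarrow> int_k_matching k V E h \<and>
     (\<exists>v'\<in>V. sum h (inc E v') = k - 1 \<and> (\<forall>v\<in>V - {v'}. sum h (inc E v) = k))"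

definition has_pap_k :: "nat \<Rightarrow> 'a set \<Rightarrow> 'a set set \<Rightarrow> bool" where
  "has_pap_k k V E \<longleftrightarrow> (\<exists>h. perfect_int_k_matching k V E h \<or> almost_perfect_int_k_matching k V E h)"

definition matching :: "'a set set \<Rightarrow> 'a set set \<Rightarrow> bool" where
  "matching E M \<longleftrightarrow> M \<subseteq> E \<and> (\<forall>e1\<in>M. \<forall>e2\<in>M. e1 \<noteq> e2 \<longrightarrow> e1 \<inter> e2 = {})"

definition has_pap :: "'a set \<Rightarrow> 'a set set \<Rightarrow> bool" where
  "has_pap V E \<longleftrightarrow> (\<exists>M. matching E M \<and> (\<Union>M = V \<or> card (V - \<Union>M) = 1))"

text \<open>G - F for F = FV (vertices) plus FE (edges).\<close>
definition del_edges :: "'a set \<Rightarrow> 'a set set \<Rightarrow> 'a set set \<Rightarrow> 'a set set" where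
  "del_edges FV FE E = {e \<in> E - FE. e \<inter> FV = {}}"

definition mpk :: "nat \<Rightarrow> 'a set \<Rightarrow> 'a set set \<Rightarrow> nat" where
  "mpk k V E = Inf {card F | F. F \<subseteq> E \<and> \<not> has_pap_k k V (E - F)}"

definition smpk :: "nat \<Rightarrow> 'a set \<Rightarrow> 'a set set \<Rightarrow> nat" where
  "smpk k V E = Inf {card FV + card FE | FV FE. FV \<subseteq> V \<and> FE \<subseteq> E \<and>
      \<not> has_pap_k k (V - FV) (del_edges FV FE E)}"

definition mp :: "'a set \<Rightarrow> 'a set set \<Rightarrow> nat" where
  "mp V E = Inf {card F | F. F \<subseteq> E \<and> \<not> has_pap V (E - F)}"

definition smp :: "'a set \<Rightarrow> 'a set set \<Rightarrow> nat" where
  "smp V E = Inf {card FV + card FE | FV FE. FV \<subseteq> V \<and> FE \<subseteq> E \<and>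
      \<not> has_pap (V - FV) (del_edges FV FE E)}"

end

theory Submission
  imports Defs
begin

lemma hall:
  fixes A :: "'a set" and N :: "'a \<Rightarrow> 'b set"
  assumes "finite A" "\<forall>S\<subseteq>A. card S \<le> card (\<Union>(N ` S))"
  shows "\<exists>f. inj_on f A \<and> (\<forall>a\<in>A. f a \<in> N a)"
  using assms
proof (induction "card A" arbitrary: A N rule: less_induct)
  case less
  show ?case
  proof (cases "A = {}")
    case True then show ?thesis by auto
  next
    case Ane: False
    have fin: "finite (\<Union>(N ` S))" if "S \<subseteq> A" "S \<noteq> {}" for S
    proof -
      have "card S > 0" using that less.prems(1) finite_subset card_gt_0_iff by blast
      with less.prems(2) that show ?thesis by (metis card.infinite le_zero_eq not_gr0)
    qed
    show ?thesis
    proof (cases "\<exists>S. S \<subseteq> A \<and> S \<noteq> {} \<and> S \<noteq> A \<and> card (\<Union>(N ` S)) = card S")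
      case True
      then obtain S where S: "S \<subseteq> A" "S \<noteq> {}" "S \<noteq> A" "card (\<Union>(N ` S)) = card S" by blast
      have finS: "finite S" using S(1) less.prems(1) finite_subset by blast
      have cS: "card S < card A" using S(1,3) less.prems(1) by (meson psubsetI psubset_card_mono)
      have h1: "\<forall>T\<subseteq>S. card T \<le> card (\<Union>(N ` T))" using less.prems(2) S(1) by auto
      obtain f1 where f1: "inj_on f1 S" "\<forall>a\<in>S. f1 a \<in> N a"
        using less.hyps[OF cS finS h1] by blast
      define N2 where "N2 = (\<lambda>x. N x - \<Union>(N ` S))"
      have cAS: "card (A - S) < card A" using S less.prems(1)
      proof -
        have "card S > 0" using finS S(2) by auto
        then show ?thesis using cS S(1) finS by (simp add: card_Diff_subset)
      qed
      have hall2: "\<forall>T\<subseteq>A-S. card T \<le> card (\<Union>(N2 ` T))"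
      proof (intro allI impI)
        fix T assume T: "T \<subseteq> A - S"
        have eq: "\<Union>(N2 ` T) = \<Union>(N ` (T \<union> S)) - \<Union>(N ` S)" unfolding N2_def by auto
        have f: "finite (\<Union>(N ` (T \<union> S)))" using fin[of "T \<union> S"] T S by auto
        have sub: "\<Union>(N ` S) \<subseteq> \<Union>(N ` (T \<union> S))" by auto
        have "card (\<Union>(N2 ` T)) = card (\<Union>(N ` (T \<union> S))) - card (\<Union>(N ` S))"
          using eq card_Diff_subset[OF finite_subset[OF sub f] sub] by simp
        moreover have "card (T \<union> S) \<le> card (\<Union>(N ` (T \<union> S)))" using less.prems(2) T S(1)
          by (metis Diff_subset le_sup_iff order_trans)
        moreover have "card (T \<union> S) = card T + card S"
          using T finS less.prems(1) by (meson Diff_disjoint card_Un_disjoint disjoint_iff finite_Diff finite_subset subsetD)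
        ultimately show "card T \<le> card (\<Union>(N2 ` T))" using S(4) by linarith
      qed
      have finAS: "finite (A - S)" using less.prems(1) by blast
      obtain f2 where f2: "inj_on f2 (A-S)" "\<forall>a\<in>A-S. f2 a \<in> N2 a"
        using less.hyps[OF cAS finAS hall2] by blast
      define f where "f = (\<lambda>x. if x \<in> S then f1 x else f2 x)"
      have "inj_on f A"
      proof (rule inj_onI)
        fix x y assume xy: "x \<in> A" "y \<in> A" "f x = f y"
        show "x = y"
        proof (cases "x \<in> S"; cases "y \<in> S")
          assume "x \<in> S" "y \<in> S" then show ?thesis using xy f1(1) unfolding f_def by (auto dest: inj_onD)
        next
          assume "x \<notin> S" "y \<notin> S" then show ?thesis using xy f2(1) unfolding f_def by (auto dest: inj_onD)
        next
          assume a: "x \<in> S" "y \<notin> S"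
          then have "f1 x \<in> \<Union>(N ` S)" "f2 y \<notin> \<Union>(N ` S)" using f1 f2 xy unfolding N2_def by auto
          then show ?thesis using xy a unfolding f_def by auto
        next
          assume a: "x \<notin> S" "y \<in> S"
          then have "f1 y \<in> \<Union>(N ` S)" "f2 x \<notin> \<Union>(N ` S)" using f1 f2 xy unfolding N2_def by auto
          then show ?thesis using xy a unfolding f_def by auto
        qed
      qed
      moreover have "\<forall>a\<in>A. f a \<in> N a" using f1 f2 unfolding f_def N2_def by auto
      ultimately show ?thesis by blast
    next
      case False
      then have strict: "\<And>S. S \<subseteq> A \<Longrightarrow> S \<noteq> {} \<Longrightarrow> S \<noteq> A \<Longrightarrow> card S + 1 \<le> card (\<Union>(N ` S))"
        using less.prems(2) by (metis Suc_eq_plus1 Suc_leI le_neq_implies_less)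
      obtain a where a: "a \<in> A" using Ane by blast
      have "card {a} \<le> card (N a)" using less.prems(2) a by (metis ccpo_Sup_singleton empty_subsetI image_empty image_insert insert_subset)
      then have "N a \<noteq> {}" by auto
      then obtain b where b: "b \<in> N a" by blast
      define N' where "N' = (\<lambda>x. N x - {b})"
      have c': "card (A - {a}) < card A" using a less.prems(1) by (meson card_Diff1_less)
      have hall': "\<forall>T\<subseteq>A-{a}. card T \<le> card (\<Union>(N' ` T))"
      proof (intro allI impI)
        fix T assume T: "T \<subseteq> A - {a}"
        show "card T \<le> card (\<Union>(N' ` T))"
        proof (cases "T = {}")
          case True then show ?thesis by simp
        next
          case False
          have "card T + 1 \<le> card (\<Union>(N ` T))" using strict[of T] T False a by auto
          moreover have "\<Union>(N' ` T) = \<Union>(N ` T) - {b}" unfolding N'_def by auto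
          moreover have "card (\<Union>(N ` T) - {b}) \<ge> card (\<Union>(N ` T)) - 1" by (simp add: card_Diff_singleton_if)
          ultimately show ?thesis by simp
        qed
      qed
      have finA': "finite (A - {a})" using less.prems(1) by blast
      obtain f' where f': "inj_on f' (A - {a})" "\<forall>x\<in>A-{a}. f' x \<in> N' x"
        using less.hyps[OF c' finA' hall'] by blast
      define f where "f = f'(a := b)"
      have "inj_on f A"
      proof (rule inj_onI)
        fix x y assume xy: "x \<in> A" "y \<in> A" "f x = f y"
        show "x = y"
          using xy f' unfolding f_def N'_def
          by (cases "x = a"; cases "y = a") (auto dest: inj_onD)
      qed
      moreover have "\<forall>x\<in>A. f x \<in> N x" using f' b unfolding f_def N'_def by auto
      ultimately show ?thesis by blast
    qed
  qed
qed

definition bipg :: "'a set \<Rightarrow> 'a set set \<Rightarrow> 'a set \<Rightarrow> 'a set \<Rightarrow> bool" where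
  "bipg V E A B \<longleftrightarrow> finite V \<and> A \<union> B = V \<and> A \<inter> B = {} \<and>
     (\<forall>e\<in>E. e \<subseteq> V \<and> card e = 2 \<and> card (e \<inter> A) = 1 \<and> card (e \<inter> B) = 1)"

lemma bipg_sym: "bipg V E A B \<Longrightarrow> bipg V E B A"
  unfolding bipg_def by auto

lemma bipg_finE: "bipg V E A B \<Longrightarrow> finite E"
  unfolding bipg_def by (meson Pow_iff finite_Pow_iff finite_subset subsetI)

lemma bipg_finA: "bipg V E A B \<Longrightarrow> finite A"
  unfolding bipg_def by (meson finite_Un)

lemma dc:
  fixes h :: "'a set \<Rightarrow> nat"
  assumes b: "bipg V E A B" and X: "X \<subseteq> A"
  shows "(\<Sum>v\<in>X. sum h (inc E v)) = sum h {e\<in>E. e \<inter> X \<noteq> {}}"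
proof -
  have fE: "finite E" using bipg_finE[OF b] .
  have fX: "finite X" using bipg_finA[OF b] X finite_subset by blast
  have "(\<Sum>v\<in>X. sum h (inc E v)) = (\<Sum>v\<in>X. \<Sum>e\<in>{e. e\<in>E \<and> v\<in>e}. h e)" by (simp add: inc_def)
  also have "\<dots> = (\<Sum>e\<in>E. \<Sum>v\<in>{v. v\<in>X \<and> v\<in>e}. h e)" by (rule sum.swap_restrict[OF fX fE])
  also have "\<dots> = (\<Sum>e\<in>E. if e \<inter> X \<noteq> {} then h e else 0)"
  proof (rule sum.cong[OF refl])
    fix e assume e: "e \<in> E"
    have c: "card (e \<inter> A) = 1" using b e unfolding bipg_def by auto
    have fin: "finite (e \<inter> A)" using c by (metis card.infinite zero_neq_one)
    have sub: "{v. v\<in>X \<and> v\<in>e} \<subseteq> e \<inter> A" using X by auto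
    have le: "card {v. v\<in>X \<and> v\<in>e} \<le> 1" using card_mono[OF fin sub] c by simp
    have "card {v. v\<in>X \<and> v\<in>e} = (if e \<inter> X \<noteq> {} then 1 else 0)"
    proof (cases "e \<inter> X = {}")
      case True then have emp: "{v. v\<in>X \<and> v\<in>e} = {}" by auto
      show ?thesis unfolding emp using True by simp
    next
      case False then have "{v. v\<in>X \<and> v\<in>e} \<noteq> {}" by auto
      moreover have "finite {v. v\<in>X \<and> v\<in>e}" using finite_subset[OF sub fin] .
      ultimately have "card {v. v\<in>X \<and> v\<in>e} \<ge> 1" by (simp add: Suc_leI card_gt_0_iff)
      then show ?thesis using le False by simp
    qed
    moreover have "(\<Sum>v\<in>{v. v\<in>X \<and> v\<in>e}. h e) = card {v. v\<in>X \<and> v\<in>e} * h e" by simp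
    ultimately show "(\<Sum>v\<in>{v. v\<in>X \<and> v\<in>e}. h e) = (if e \<inter> X \<noteq> {} then h e else 0)" by simp
  qed
  also have "\<dots> = sum h {e\<in>E. e \<inter> X \<noteq> {}}" by (simp add: sum.inter_filter fE)
  finally show ?thesis .
qed

lemma sumA:
  fixes h :: "'a set \<Rightarrow> nat"
  assumes b: "bipg V E A B"
  shows "(\<Sum>v\<in>A. sum h (inc E v)) = sum h E"
proof -
  have "{e\<in>E. e \<inter> A \<noteq> {}} = E"
  proof -
    have "e \<inter> A \<noteq> {}" if "e \<in> E" for e
      using b that unfolding bipg_def by (metis card.empty zero_neq_one)
    then show ?thesis by auto
  qed
  then show ?thesis using dc[OF b order_refl] by simp
qed

lemma no_almost_aux:
  fixes k :: nat
  assumes b: "bipg V E A B" and k: "k \<ge> 2" and v': "v' \<in> A"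
    and h1: "sum h (inc E v') = k - 1" and h2: "\<forall>v\<in>V - {v'}. sum h (inc E v) = k"
  shows False
proof -
  have fA: "finite A" using bipg_finA[OF b] .
  have fB: "finite B" using bipg_finA[OF bipg_sym[OF b]] .
  have AV: "A \<subseteq> V" "B \<subseteq> V" "A \<inter> B = {}" using b unfolding bipg_def by auto
  have "(\<Sum>v\<in>A. sum h (inc E v)) = sum h (inc E v') + (\<Sum>v\<in>A - {v'}. sum h (inc E v))"
    using sum.remove[OF fA v'] .
  also have "(\<Sum>v\<in>A - {v'}. sum h (inc E v)) = (\<Sum>v\<in>A - {v'}. k)"
    using h2 AV by (intro sum.cong) auto
  finally have sA: "(\<Sum>v\<in>A. sum h (inc E v)) = (k - 1) + k * (card A - 1)"
    using h1 v' fA by simp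
  have sB: "(\<Sum>v\<in>B. sum h (inc E v)) = (\<Sum>v\<in>B. k)"
    using h2 AV v' by (intro sum.cong) auto
  have eq: "(k - 1) + k * (card A - 1) = k * card B"
    using sA sB sumA[OF b, of h] sumA[OF bipg_sym[OF b], of h] by simp
  obtain c where c: "card A = Suc c" using v' fA by (metis card_gt_0_iff empty_iff gr0_conv_Suc)
  have "k * card A = k * card B + 1" using eq c k by (simp add: algebra_simps)
  then have "k dvd 1" by (metis dvd_add_right_iff dvd_triv_left)
  then show False using k by simp
qed

lemma no_almost:
  assumes b: "bipg V E A B" and k: "k \<ge> 2"
  shows "\<not> almost_perfect_int_k_matching k V E h"
proof
  assume "almost_perfect_int_k_matching k V E h"
  then obtain v' where v': "v' \<in> V" "sum h (inc E v') = k - 1" "\<forall>v\<in>V - {v'}. sum h (inc E v) = k"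
    unfolding almost_perfect_int_k_matching_def by blast
  have "v' \<in> A \<or> v' \<in> B" using b v'(1) unfolding bipg_def by auto
  then show False
    using no_almost_aux[OF b k _ v'(2,3)] no_almost_aux[OF bipg_sym[OF b] k _ v'(2,3)] by blast
qed

lemma perf_card:
  assumes b: "bipg V E A B" and k: "k \<ge> 1" and p: "perfect_int_k_matching k V E h"
  shows "card A = card B"
proof -
  have AV: "A \<subseteq> V" "B \<subseteq> V" using b unfolding bipg_def by auto
  have p': "\<forall>v\<in>V. sum h (inc E v) = k" using p unfolding perfect_int_k_matching_def by blast
  have "(\<Sum>v\<in>A. sum h (inc E v)) = (\<Sum>v\<in>A. k)" using p' AV by (intro sum.cong) auto
  moreover have "(\<Sum>v\<in>B. sum h (inc E v)) = (\<Sum>v\<in>B. k)" using p' AV by (intro sum.cong) auto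
  ultimately have "card A * k = card B * k"
    using sumA[OF b, of h] sumA[OF bipg_sym[OF b], of h] by simp
  then show ?thesis using k by simp
qed

lemma perf_match:
  assumes b: "bipg V E A B" and k: "k \<ge> 1" and p: "perfect_int_k_matching k V E h"
  shows "\<exists>M. matching E M \<and> \<Union>M = V"
proof -
  have AV: "A \<subseteq> V" "B \<subseteq> V" "A \<inter> B = {}" "A \<union> B = V" using b unfolding bipg_def by auto
  have fA: "finite A" using bipg_finA[OF b] .
  have fB: "finite B" using bipg_finA[OF bipg_sym[OF b]] .
  have p': "\<forall>v\<in>V. sum h (inc E v) = k" using p unfolding perfect_int_k_matching_def by blast
  define N where "N = (\<lambda>a. {b. {a,b} \<in> E})"
  have NB: "b' \<in> B" if a: "a \<in> A" and bb: "b' \<in> N a" for a b'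
  proof -
    have e: "{a,b'} \<in> E" using bb unfolding N_def by auto
    then have props: "{a,b'} \<subseteq> V" "card {a,b'} = 2" "card ({a,b'} \<inter> A) = 1"
      using b unfolding bipg_def by auto
    have "a \<noteq> b'" using props(2) by auto
    have "b' \<notin> A"
    proof
      assume "b' \<in> A"
      then have "{a,b'} \<inter> A = {a,b'}" using a by auto
      then show False using props by simp
    qed
    then show ?thesis using props(1) AV by auto
  qed
  have hallc: "\<forall>S\<subseteq>A. card S \<le> card (\<Union>(N ` S))"
  proof (intro allI impI)
    fix S assume S: "S \<subseteq> A"
    define NS where "NS = \<Union>(N ` S)"
    have NSB: "NS \<subseteq> B" using NB S unfolding NS_def by blast
    have fS: "finite S" using S fA finite_subset by blast
    have fNS: "finite NS" using NSB fB finite_subset by blast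
    have sub: "{e\<in>E. e \<inter> S \<noteq> {}} \<subseteq> {e\<in>E. e \<inter> NS \<noteq> {}}"
    proof
      fix e assume "e \<in> {e\<in>E. e \<inter> S \<noteq> {}}"
      then obtain s where e: "e \<in> E" "s \<in> e" "s \<in> S" by auto
      have "card e = 2" using b e unfolding bipg_def by auto
      then obtain x y where xy: "e = {x,y}" "x \<noteq> y" by (meson card_2_iff)
      then obtain b' where eb: "e = {s,b'}" using e(2) by auto
      then have "b' \<in> N s" unfolding N_def using e by auto
      then have "b' \<in> NS" using e(3) unfolding NS_def by auto
      then show "e \<in> {e\<in>E. e \<inter> NS \<noteq> {}}" using e eb by auto
    qed
    have "card S * k = (\<Sum>v\<in>S. sum h (inc E v))" using p' S AV by (simp add: subset_iff)
    also have "\<dots> = sum h {e\<in>E. e \<inter> S \<noteq> {}}" using dc[OF b S] .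
    also have "\<dots> \<le> sum h {e\<in>E. e \<inter> NS \<noteq> {}}"
      using sub bipg_finE[OF b] by (intro sum_mono2) auto
    also have "\<dots> = (\<Sum>v\<in>NS. sum h (inc E v))" by (rule dc[OF bipg_sym[OF b] NSB, symmetric])
    also have "\<dots> = card NS * k" using p' NSB AV by (simp add: subset_iff)
    finally have "card S * k \<le> card NS * k" .
    then show "card S \<le> card (\<Union>(N ` S))" using k unfolding NS_def by simp
  qed
  obtain f where f: "inj_on f A" "\<forall>a\<in>A. f a \<in> N a" using hall[OF fA hallc] by blast
  have fAB: "f ` A \<subseteq> B" using f(2) NB by auto
  have "card (f ` A) = card B" using card_image[OF f(1)] perf_card[OF b k p] by simp
  then have fAeq: "f ` A = B" using card_subset_eq[OF fB fAB] by simp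
  define M where "M = (\<lambda>a. {a, f a}) ` A"
  have ME: "M \<subseteq> E" using f(2) unfolding M_def N_def by auto
  have disj: "\<forall>e1\<in>M. \<forall>e2\<in>M. e1 \<noteq> e2 \<longrightarrow> e1 \<inter> e2 = {}"
  proof (intro ballI impI)
    fix e1 e2 assume e: "e1 \<in> M" "e2 \<in> M" "e1 \<noteq> e2"
    then obtain a1 a2 where a: "a1 \<in> A" "a2 \<in> A" "e1 = {a1, f a1}" "e2 = {a2, f a2}"
      unfolding M_def by auto
    then have "a1 \<noteq> a2" using e by auto
    then have "f a1 \<noteq> f a2" using f(1) a by (meson inj_onD)
    moreover have "f a1 \<in> B" "f a2 \<in> B" using fAB a by auto
    ultimately show "e1 \<inter> e2 = {}" using a \<open>a1 \<noteq> a2\<close> AV(3) by auto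
  qed
  have "\<Union>M = A \<union> f ` A" unfolding M_def by auto
  then have "\<Union>M = V" using fAeq AV by simp
  then show ?thesis using ME disj unfolding matching_def by blast
qed

lemma match_perf:
  assumes fE: "finite E" and m: "matching E M" and U: "\<Union>M = V"
  shows "perfect_int_k_matching k V E (\<lambda>e. if e \<in> M then k else 0)"
proof -
  have ME: "M \<subseteq> E" and d: "\<forall>e1\<in>M. \<forall>e2\<in>M. e1 \<noteq> e2 \<longrightarrow> e1 \<inter> e2 = {}"
    using m unfolding matching_def by auto
  have s: "sum (\<lambda>e. if e \<in> M then k else 0) (inc E v) = k" if v: "v \<in> V" for v
  proof -
    obtain e0 where e0: "e0 \<in> M" "v \<in> e0" using v U by auto
    have fin: "finite (inc E v)" using fE unfolding inc_def by auto
    have eq: "{e\<in>inc E v. e \<in> M} = {e0}"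
      using e0 ME d unfolding inc_def by blast
    have "sum (\<lambda>e. if e \<in> M then k else 0) (inc E v) = sum (\<lambda>e. k) {e\<in>inc E v. e \<in> M}"
      by (rule sum.inter_filter[OF fin, symmetric])
    then show ?thesis using eq by simp
  qed
  then show ?thesis unfolding perfect_int_k_matching_def int_k_matching_def by auto
qed

lemma match_even:
  assumes b: "bipg V E A B" and m: "matching E M"
  shows "even (card (\<Union>M))"
proof -
  have ME: "M \<subseteq> E" and d: "\<forall>e1\<in>M. \<forall>e2\<in>M. e1 \<noteq> e2 \<longrightarrow> e1 \<inter> e2 = {}"
    using m unfolding matching_def by auto
  have c2: "\<forall>e\<in>M. card e = 2" using ME b unfolding bipg_def by auto
  have pw: "pairwise disjnt M" using d unfolding pairwise_def disjnt_def by blast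
  have fe: "\<And>e. e \<in> M \<Longrightarrow> finite e" using c2 by (metis card.infinite zero_neq_numeral)
  have "card (\<Union>M) = sum card M" using card_Union_disjoint[OF pw fe] by simp
  also have "\<dots> = sum (\<lambda>_. 2) M" using c2 by (intro sum.cong) auto
  finally show ?thesis by simp
qed

lemma papk_pap:
  assumes b: "bipg V E A B" and k: "k \<ge> 2" and h: "has_pap_k k V E"
  shows "has_pap V E"
proof -
  obtain h where "perfect_int_k_matching k V E h \<or> almost_perfect_int_k_matching k V E h"
    using h unfolding has_pap_k_def by blast
  then have p: "perfect_int_k_matching k V E h" using no_almost[OF b k] by blast
  have "\<exists>M. matching E M \<and> \<Union>M = V" using perf_match[OF b _ p] k by simp
  then obtain M where "matching E M" "\<Union>M = V" by blast
  then show ?thesis unfolding has_pap_def by blast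
qed

lemma pap_papk:
  assumes b: "bipg V E A B" and ev: "even (card V)" and h: "has_pap V E"
  shows "has_pap_k k V E"
proof -
  obtain M where m: "matching E M" "\<Union>M = V \<or> card (V - \<Union>M) = 1"
    using h unfolding has_pap_def by blast
  have ME: "M \<subseteq> E" using m unfolding matching_def by auto
  have sub: "\<Union>M \<subseteq> V" using ME b unfolding bipg_def by auto
  have fV: "finite V" using b unfolding bipg_def by auto
  have "\<Union>M = V"
  proof (rule ccontr)
    assume "\<Union>M \<noteq> V"
    then have c1: "card (V - \<Union>M) = 1" using m by auto
    have "card V = card (\<Union>M) + card (V - \<Union>M)"
      using sub fV by (metis card_Diff_subset card_mono diff_add_inverse le_add_diff_inverse finite_subset)
    then show False using c1 ev match_even[OF b m(1)] by simp
  qed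
  then show ?thesis using match_perf[OF bipg_finE[OF b] m(1)] unfolding has_pap_k_def by blast
qed

lemma odd_nopapk:
  assumes b: "bipg V E A B" and k: "k \<ge> 2" and o: "odd (card V)"
  shows "\<not> has_pap_k k V E"
proof
  assume "has_pap_k k V E"
  then obtain h where "perfect_int_k_matching k V E h \<or> almost_perfect_int_k_matching k V E h"
    unfolding has_pap_k_def by blast
  then have p: "perfect_int_k_matching k V E h" using no_almost[OF b k] by blast
  have "card A = card B" using perf_card[OF b _ p] k by simp
  moreover have "card V = card A + card B" using b bipg_finA[OF b] bipg_finA[OF bipg_sym[OF b]]
    unfolding bipg_def by (metis card_Un_disjoint)
  ultimately show False using o by simp
qed

lemma bipg_sub:
  assumes b: "bipg V E A B"
  shows "bipg (V - FV) (del_edges FV FE E) (A - FV) (B - FV)"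
proof -
  have "e \<inter> (A - FV) = e \<inter> A" "e \<inter> (B - FV) = e \<inter> B" "e \<subseteq> V - FV"
    if "e \<in> del_edges FV FE E" for e
    using that b unfolding del_edges_def bipg_def by auto
  then show ?thesis using b unfolding bipg_def del_edges_def by auto
qed

lemma bipg_subE:
  assumes b: "bipg V E A B"
  shows "bipg V (E - F) A B"
  using b unfolding bipg_def by auto


lemma Inf0: "(0::nat) \<in> S \<Longrightarrow> Inf S = 0"
  by (rule cInf_eq_minimum) auto

theorem theorem3p13:
  fixes k :: nat and V :: "'a set" and E :: "'a set set"
  assumes "odd k" and "k \<ge> 3"
    and "simple_graph V E" and "bipartite V E"
  shows "(odd (card V) \<longrightarrow> mpk k V E = 0 \<and> smpk k V E = 0) \<and>
         (even (card V) \<longrightarrow> mpk k V E = mp V E \<and> smpk k V E \<le> smp V E)"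
proof -
  obtain A B where AB: "A \<union> B = V" "A \<inter> B = {}" "\<forall>e\<in>E. card (e \<inter> A) = 1 \<and> card (e \<inter> B) = 1"
    using assms(4) unfolding bipartite_def by blast
  have b: "bipg V E A B" using AB assms(3) unfolding simple_graph_def bipg_def by auto
  have k2: "k \<ge> 2" using assms(2) by simp
  have odd_part: "mpk k V E = 0 \<and> smpk k V E = 0" if o: "odd (card V)"
  proof -
    have np: "\<not> has_pap_k k V E" using odd_nopapk[OF b k2 o] .
    have "card ({}::'a set set) \<in> {card F |F. F \<subseteq> E \<and> \<not> has_pap_k k V (E - F)}"
      using np by force
    then have 1: "mpk k V E = 0" unfolding mpk_def using Inf0 by simp
    have de: "del_edges {} {} E = E" unfolding del_edges_def by auto
    have "card ({}::'a set) + card ({}::'a set set) \<in> {card FV + card FE |FV FE. FV \<subseteq> V \<and> FE \<subseteq> E \<and>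
      \<not> has_pap_k k (V - FV) (del_edges FV FE E)}"
      using np de by force
    then have 2: "smpk k V E = 0" unfolding smpk_def using Inf0 by simp
    show ?thesis using 1 2 by simp
  qed
  have even_part: "mpk k V E = mp V E \<and> smpk k V E \<le> smp V E" if ev: "even (card V)"
  proof -
    have eqv: "has_pap_k k V (E - F) = has_pap V (E - F)" for F
      using papk_pap[OF bipg_subE[OF b] k2] pap_papk[OF bipg_subE[OF b] ev] by blast
    have 1: "mpk k V E = mp V E" unfolding mpk_def mp_def using eqv by simp
    define S1 where "S1 = {card FV + card FE |FV FE. FV \<subseteq> V \<and> FE \<subseteq> E \<and>
      \<not> has_pap (V - FV) (del_edges FV FE E)}"
    define S2 where "S2 = {card FV + card FE |FV FE. FV \<subseteq> V \<and> FE \<subseteq> E \<and>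
      \<not> has_pap_k k (V - FV) (del_edges FV FE E)}"
    have imp: "has_pap_k k (V - FV) (del_edges FV FE E) \<Longrightarrow> has_pap (V - FV) (del_edges FV FE E)" for FV FE
      using papk_pap[OF bipg_sub[OF b] k2] by blast
    have sub: "S1 \<subseteq> S2" unfolding S1_def S2_def using imp by blast
    have "Inf S2 \<le> Inf S1"
    proof (cases "V = {}")
      case True
      have "has_pap_k k (V - FV) (del_edges FV FE E)" for FV FE
      proof -
        have "V - FV = {}" using True by simp
        moreover have "has_pap_k k {} E'" for E' :: "'a set set"
          unfolding has_pap_k_def perfect_int_k_matching_def int_k_matching_def
          by (rule exI[of _ "\<lambda>_. 0"]) simp
        ultimately show ?thesis by metis
      qed
      then have "S2 = {}" unfolding S2_def by blast
      then show ?thesis using sub by simp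
    next
      case False
      obtain u where u: "u \<in> V" using False by blast
      have fV: "finite V" using b unfolding bipg_def by simp
      have "V - {u} \<noteq> {}"
      proof
        assume "V - {u} = {}"
        then have "V = {u}" using u by blast
        then show False using ev by simp
      qed
      then obtain v where v: "v \<in> V" "v \<noteq> u" by blast
      have dl: "del_edges (V - {u, v}) E E = {}" unfolding del_edges_def by auto
      have Vd: "V - (V - {u, v}) = {u, v}" using u v by auto
      have "\<not> has_pap {u, v} ({}::'a set set)"
        unfolding has_pap_def matching_def using v by auto
      then have "card (V - {u, v}) + card E \<in> S1" unfolding S1_def using dl Vd by force
      then have "S1 \<noteq> {}" by blast
      then show ?thesis using sub by (intro cInf_superset_mono) auto
    qed
    then have 2: "smpk k V E \<le> smp V E" unfolding smpk_def smp_def S1_def S2_def .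
    show ?thesis using 1 2 by simp
  qed
  show ?thesis using odd_part even_part by blast
qed

end
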